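(* Let $S$ be an inductive left $E$-monoid with left $E$-modal operation $\cdot$, and let $P(E,S)$ be the set $E\times S$ with multiplication $(e,s)*(f,t)=(e\wedge(s\cdot f),\,st)$ and unary operation $D((e,s))=(e,1)$. Then the map $\psi:P(E,S)\to Rest(E,S)$, $\psi((e,s))=(e,es)$, is a surjective semigroup homomorphism satisfying $\psi(D(x))=D(\psi(x))$ for all $x\in P(E,S)$, and $\psi$ is injective on $D(P(E,S))=\{(e,1)\mid e\in E\}$.
   Context: For a semigroup $S$, $E(S)$ is its set of idempotents; for $e,f\in E(S)$, $e\le_r f$ iff $e=ef$. $E\subseteq E(S)$ is right pre-reduced if $e=ef$ and $f=fe$ imply $e=f$ for $e,f\in E$. Let $S$ be a monoid and $1\in E\subseteq E(S)$. $S$ is an inductive left $E$-monoid if $E$ is right pre-reduced, $(E,\le_r)$ is a meet-semilattice with meet $\wedge$, and (I1') for all $t\in S$, $e\in E$ there is $t\cdot e\in E$ such that for all $s\in S$: $ste=st$ iff $s(t\cdot e)=s$ (the map $(t,e)\mapsto t\cdot e$, necessarily unique, is the left $E$-modal operation); (I2') for $s\in S$, $e,f\in E$: $se=sf=s$ implies $s(e\wedge f)=s$. $Rest(E,S)$ is the set $C_E(S)=\{(e,s)\in E\times S\mid es=s\}$ with multiplication $(e,s)(f,t)=(e\wedge(s\cdot f),(e\wedge(s\cdot f))st)$ and $D((e,s))=(e,e)$. *)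

theory Defs
  imports Main
begin

text \<open>The monoid S is modelled as a type of class monoid_mult; E is a subset.\<close>

definition leq_r :: "'a::monoid_mult \<Rightarrow> 'a \<Rightarrow> bool" where
  "leq_r e f \<longleftrightarrow> e = e * f"

definition idempotents :: "'a::monoid_mult set" where
  "idempotents = {e. e * e = e}"

definition right_pre_reduced :: "'a::monoid_mult set \<Rightarrow> bool" where
  "right_pre_reduced E \<longleftrightarrow> (\<forall>e\<in>E. \<forall>f\<in>E. e = e * f \<and> f = f * e \<longrightarrow> e = f)"

definition is_meet_on :: "'a::monoid_mult set \<Rightarrow> ('a \<Rightarrow> 'a \<Rightarrow> 'a) \<Rightarrow> bool" where
  "is_meet_on E mt \<longleftrightarrow> (\<forall>e\<in>E. \<forall>f\<in>E. mt e f \<in> E \<and> leq_r (mt e f) e \<and> leq_r (mt e f) f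
      \<and> (\<forall>g\<in>E. leq_r g e \<and> leq_r g f \<longrightarrow> leq_r g (mt e f)))"

definition inductive_left_E_monoid ::
    "'a::monoid_mult set \<Rightarrow> ('a \<Rightarrow> 'a \<Rightarrow> 'a) \<Rightarrow> ('a \<Rightarrow> 'a \<Rightarrow> 'a) \<Rightarrow> bool" where
  "inductive_left_E_monoid E mt dot \<longleftrightarrow>
     1 \<in> E \<and> E \<subseteq> idempotents \<and> right_pre_reduced E \<and> is_meet_on E mt \<and>
     (\<forall>t e. e \<in> E \<longrightarrow> dot t e \<in> E \<and> (\<forall>s. s * t * e = s * t \<longleftrightarrow> s * dot t e = s)) \<and>
     (\<forall>s e f. e \<in> E \<longrightarrow> f \<in> E \<longrightarrow> s * e = s \<longrightarrow> s * f = s \<longrightarrow> s * mt e f = s)"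

definition P_set :: "'a::monoid_mult set \<Rightarrow> ('a \<times> 'a) set" where
  "P_set E = E \<times> UNIV"

definition P_mult :: "('a::monoid_mult \<Rightarrow> 'a \<Rightarrow> 'a) \<Rightarrow> ('a \<Rightarrow> 'a \<Rightarrow> 'a)
    \<Rightarrow> 'a \<times> 'a \<Rightarrow> 'a \<times> 'a \<Rightarrow> 'a \<times> 'a" where
  "P_mult mt dot x y = (case x of (e, s) \<Rightarrow> case y of (f, t) \<Rightarrow> (mt e (dot s f), s * t))"

definition P_D :: "'a::monoid_mult \<times> 'a \<Rightarrow> 'a \<times> 'a" where
  "P_D x = (fst x, 1)"

definition Rest_set :: "'a::monoid_mult set \<Rightarrow> ('a \<times> 'a) set" where
  "Rest_set E = {(e, s). e \<in> E \<and> e * s = s}"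

definition Rest_mult :: "('a::monoid_mult \<Rightarrow> 'a \<Rightarrow> 'a) \<Rightarrow> ('a \<Rightarrow> 'a \<Rightarrow> 'a)
    \<Rightarrow> 'a \<times> 'a \<Rightarrow> 'a \<times> 'a \<Rightarrow> 'a \<times> 'a" where
  "Rest_mult mt dot x y = (case x of (e, s) \<Rightarrow> case y of (f, t) \<Rightarrow>
      (mt e (dot s f), mt e (dot s f) * s * t))"

definition Rest_D :: "'a::monoid_mult \<times> 'a \<Rightarrow> 'a \<times> 'a" where
  "Rest_D x = (fst x, fst x)"

definition psi :: "'a::monoid_mult \<times> 'a \<Rightarrow> 'a \<times> 'a" where
  "psi x = (fst x, fst x * snd x)"

end

theory Submission
  imports Defs
begin

lemma key:
  fixes E :: "'a::monoid_mult set" and mt dot :: "'a \<Rightarrow> 'a \<Rightarrow> 'a"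
  assumes A: "inductive_left_E_monoid E mt dot" and e: "e \<in> E" and f: "f \<in> E"
  shows "mt e (dot (e*s) f) = mt e (dot s f) \<and> mt e (dot s f) * s * f = mt e (dot s f) * s
         \<and> mt e (dot s f) * e = mt e (dot s f)"
proof -
  have E1: "E \<subseteq> idempotents" and rp: "right_pre_reduced E" and M: "is_meet_on E mt"
    and dt: "\<And>t e. e \<in> E \<Longrightarrow> dot t e \<in> E \<and> (\<forall>s. s * t * e = s * t \<longleftrightarrow> s * dot t e = s)"
    using A unfolding inductive_left_E_monoid_def by auto
  define x where "x = mt e (dot s f)"
  define y where "y = mt e (dot (e*s) f)"
  have d1: "dot s f \<in> E" and d2: "dot (e*s) f \<in> E" using dt f by auto
  have xE: "x \<in> E" and xe: "x = x * e" and xd: "x = x * dot s f"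
    using M e d1 unfolding is_meet_on_def leq_r_def x_def by auto
  have yE: "y \<in> E" and ye: "y = y * e" and yd: "y = y * dot (e*s) f"
    using M e d2 unfolding is_meet_on_def leq_r_def y_def by auto
  have xsf: "x * s * f = x * s" using dt[OF f] xd by metis
  have yesf: "y * (e*s) * f = y * (e*s)" using dt[OF f] yd by metis
  have "x * (e*s) * f = x * (e*s)" using xsf xe by (metis mult.assoc)
  hence "x * dot (e*s) f = x" using dt[OF f] by metis
  hence xy: "leq_r x y" using M e d2 xE xe unfolding is_meet_on_def leq_r_def y_def by metis
  have "y * s * f = y * s" using yesf ye by (metis mult.assoc)
  hence "y * dot s f = y" using dt[OF f] by metis
  hence yx: "leq_r y x" using M e d1 yE ye unfolding is_meet_on_def leq_r_def x_def by metis
  have "x = y" using rp xE yE xy yx unfolding right_pre_reduced_def leq_r_def by blast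
  thus ?thesis using xsf xe unfolding x_def y_def by simp
qed

theorem proposition6p1:
  fixes E :: "'a::monoid_mult set" and mt dot :: "'a \<Rightarrow> 'a \<Rightarrow> 'a"
  assumes "inductive_left_E_monoid E mt dot"
  shows "psi ` P_set E = Rest_set E
    \<and> (\<forall>x\<in>P_set E. \<forall>y\<in>P_set E. psi (P_mult mt dot x y) = Rest_mult mt dot (psi x) (psi y))
    \<and> (\<forall>x\<in>P_set E. psi (P_D x) = Rest_D (psi x))
    \<and> inj_on psi (P_D ` P_set E)"
proof (intro conjI)
  have E1: "E \<subseteq> idempotents" using assms unfolding inductive_left_E_monoid_def by auto
  show "psi ` P_set E = Rest_set E"
  proof
    show "psi ` P_set E \<subseteq> Rest_set E"
      using E1 by (auto simp: psi_def P_set_def Rest_set_def idempotents_def mult.assoc[symmetric])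
    show "Rest_set E \<subseteq> psi ` P_set E"
    proof
      fix z assume "z \<in> Rest_set E"
      then obtain e s where z: "z = (e,s)" "e \<in> E" "e*s = s" by (auto simp: Rest_set_def)
      hence "z = psi (e,s)" by (simp add: psi_def)
      thus "z \<in> psi ` P_set E" using z by (auto simp: P_set_def)
    qed
  qed
  show "\<forall>x\<in>P_set E. \<forall>y\<in>P_set E. psi (P_mult mt dot x y) = Rest_mult mt dot (psi x) (psi y)"
  proof (intro ballI)
    fix x y assume "x \<in> P_set E" "y \<in> P_set E"
    then obtain e s f t where xy: "x = (e,s)" "y = (f,t)" "e \<in> E" "f \<in> E" by (auto simp: P_set_def)
    from key[OF assms xy(3,4), of s] have k:
      "mt e (dot (e*s) f) = mt e (dot s f)" "mt e (dot s f) * s * f = mt e (dot s f) * s"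
      "mt e (dot s f) * e = mt e (dot s f)" by auto
    have "mt e (dot s f) * (e * s) * (f * t) = mt e (dot s f) * s * t"
      using k(2,3) by (metis mult.assoc)
    thus "psi (P_mult mt dot x y) = Rest_mult mt dot (psi x) (psi y)"
      using k(1) xy by (simp add: psi_def P_mult_def Rest_mult_def mult.assoc)
  qed
  show "\<forall>x\<in>P_set E. psi (P_D x) = Rest_D (psi x)"
    by (simp add: psi_def P_D_def Rest_D_def)
  show "inj_on psi (P_D ` P_set E)"
    by (auto simp: inj_on_def psi_def P_D_def)
qed

end
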